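(* Let $q$ be a power of the prime $p$. For every integer $c\ge2$ and every integer $k\ge0$, $$R^c_k\le p\cdot\max_{0\le j\le k}\binom{k+c-2-j}{c-2}\binom{q/p-1}{\lfloor j/p\rfloor}.$$
   Context: Binomial coefficients $\binom{x}{m}=x(x-1)\cdots(x-m+1)/m!$ for real $x$, integer $m\ge0$. $R^1_k=-(-1)^{\lfloor k/p\rfloor}\binom{q/p-1}{\lfloor k/p\rfloor}$ for integers $k\ge0$, and recursively $R^c_k=\sum_{j=0}^kR^{c-1}_j$ for $c\ge2$. *)

theory Defs
  imports Complex_Main "HOL-Computational_Algebra.Primes"
begin

definition R1 :: "nat \<Rightarrow> nat \<Rightarrow> nat \<Rightarrow> real" where
  "R1 p q k = - ((-1) ^ (k div p) * ((real q / real p - 1) gchoose (k div p)))"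

text \<open>R p q c k = R^c_k for c \<ge> 1 (value at c = 0 is an irrelevant default).\<close>
fun R :: "nat \<Rightarrow> nat \<Rightarrow> nat \<Rightarrow> nat \<Rightarrow> real" where
  "R p q 0 k = 0"
| "R p q (Suc 0) k = R1 p q k"
| "R p q (Suc (Suc c)) k = (\<Sum>j\<le>k. R p q (Suc c) j)"

end

theory Submission
  imports Defs
begin


lemma row_ratio: "Suc t * (m choose Suc t) = (m - t) * (m choose t)"
  using binomial_absorption[of t m] binomial_absorb_comp[of m t] by simp

lemma binom_logconc: "(m choose t) * (m choose Suc (Suc t)) \<le> (m choose Suc t)^2"
proof -
  have e1: "Suc t * (m choose Suc t) = (m - t) * (m choose t)" by (rule row_ratio)
  have e2: "Suc (Suc t) * (m choose Suc (Suc t)) = (m - Suc t) * (m choose Suc t)" by (rule row_ratio)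
  have le: "Suc t * (m - Suc t) \<le> Suc (Suc t) * (m - t)"
    by (intro mult_mono) auto
  have "(Suc t * Suc (Suc t)) * ((m choose t) * (m choose Suc (Suc t)))
      = Suc t * (m choose t) * (Suc (Suc t) * (m choose Suc (Suc t)))" by (simp only: mult_ac)
  also have "\<dots> = (Suc t * (m - Suc t)) * ((m choose t) * (m choose Suc t))" unfolding e2 by (simp only: mult_ac)
  also have "\<dots> \<le> (Suc (Suc t) * (m - t)) * ((m choose t) * (m choose Suc t))"
    using le by (rule mult_right_mono) simp
  also have "\<dots> = Suc (Suc t) * (m choose Suc t) * ((m - t) * (m choose t))" by (simp only: mult_ac)
  also have "\<dots> = (Suc t * Suc (Suc t)) * (m choose Suc t)^2" unfolding e1[symmetric] power2_eq_square by (simp only: mult_ac)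
  finally show ?thesis by (metis mult_le_cancel1 zero_less_Suc nat_0_less_mult_iff)
qed

lemma w_prod: "real ((s + d) choose d) = (\<Prod>i<d. real s + 1 + real i) / fact d"
proof -
  have "real ((s + d) choose d) = real (s+d) gchoose d" by (rule binomial_gbinomial)
  also have "\<dots> = pochhammer (real s + 1) d / fact d"
    by (simp add: gbinomial_pochhammer')
  also have "\<dots> = (\<Prod>i<d. real s + 1 + real i) / fact d"
    by (simp add: pochhammer_prod atLeast0LessThan)
  finally show ?thesis .
qed

lemma w_logconc: "real ((s + d) choose d) * real ((s + 2*p + d) choose d) \<le> real ((s + p + d) choose d)^2"
proof -
  have "(\<Prod>i<d. real s + 1 + real i) * (\<Prod>i<d. real (s + 2*p) + 1 + real i)
      = (\<Prod>i<d. (real s + 1 + real i) * (real (s + 2*p) + 1 + real i))"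
    by (simp add: prod.distrib)
  also have "\<dots> \<le> (\<Prod>i<d. (real (s+p) + 1 + real i) * (real (s + p) + 1 + real i))"
  proof (rule prod_mono)
    fix i assume "i \<in> {..<d}"
    have "(real s + 1 + real i) * (real (s + 2*p) + 1 + real i) \<le> (real (s+p) + 1 + real i) * (real (s + p) + 1 + real i)"
      by (simp add: algebra_simps)
    then show "0 \<le> (real s + 1 + real i) * (real (s + 2*p) + 1 + real i) \<and> (real s + 1 + real i) * (real (s + 2*p) + 1 + real i) \<le> (real (s+p) + 1 + real i) * (real (s + p) + 1 + real i)"
      by simp
  qed
  also have "\<dots> = (\<Prod>i<d. real (s+p) + 1 + real i)^2"
    by (simp add: prod.distrib power2_eq_square)
  finally have *: "(\<Prod>i<d. real s + 1 + real i) * (\<Prod>i<d. real (s + 2*p) + 1 + real i) \<le> (\<Prod>i<d. real (s+p) + 1 + real i)^2" .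
  have "real ((s + d) choose d) * real ((s + 2*p + d) choose d) = 
     ((\<Prod>i<d. real s + 1 + real i) * (\<Prod>i<d. real (s + 2*p) + 1 + real i)) / (fact d * fact d)"
    using w_prod[of s d] w_prod[of "s+2*p" d] by simp
  also have "\<dots> \<le> (\<Prod>i<d. real (s+p) + 1 + real i)^2 / (fact d * fact d)"
    using * by (intro divide_right_mono) auto
  also have "\<dots> = real ((s + p + d) choose d)^2"
    using w_prod[of "s+p" d] by (simp add: power2_eq_square)
  finally show ?thesis .
qed



lemma alt_noninc:
  fixes f :: "nat \<Rightarrow> real"
  assumes "\<And>t. 0 \<le> f t" "\<And>t. f (Suc t) \<le> f t"
  shows "0 \<le> (\<Sum>t<n. (-1)^t * f t) \<and> (\<Sum>t<n. (-1)^t * f t) \<le> f 0"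
  using assms
proof (induction n arbitrary: f)
  case 0 then show ?case by simp
next
  case (Suc n)
  have IH: "0 \<le> (\<Sum>t<n. (-1)^t * f (Suc t)) \<and> (\<Sum>t<n. (-1)^t * f (Suc t)) \<le> f (Suc 0)"
    using Suc.IH[of "\<lambda>t. f (Suc t)"] Suc.prems by auto
  have "(\<Sum>t<Suc n. (-1)^t * f t) = f 0 - (\<Sum>t<n. (-1)^t * f (Suc t))"
    by (subst sum.lessThan_Suc_shift) (simp add: sum_negf)
  then show ?case using IH Suc.prems(2)[of 0] by auto
qed

lemma alt_unimodal:
  fixes f :: "nat \<Rightarrow> real"
  assumes "\<And>t. 0 \<le> f t" "\<And>t. f t \<le> B"
    "\<And>t. f (Suc t) \<le> f t \<Longrightarrow> f (Suc (Suc t)) \<le> f (Suc t)"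
  shows "f 0 - B \<le> (\<Sum>t<n. (-1)^t * f t) \<and> (\<Sum>t<n. (-1)^t * f t) \<le> B"
  using assms
proof (induction n arbitrary: f)
  case 0 then have "0 \<le> f 0" "f 0 \<le> B" by auto
  then show ?case by simp
next
  case (Suc n)
  show ?case
  proof (cases "f 1 \<le> f 0")
    case True
    have dec: "f (Suc t) \<le> f t" for t
      by (induction t) (use True Suc.prems(3) in auto)
    from alt_noninc[of f "Suc n", OF Suc.prems(1) dec] Suc.prems(2)[of 0] show ?thesis by auto
  next
    case False
    have IH: "f 1 - B \<le> (\<Sum>t<n. (-1)^t * f (Suc t)) \<and> (\<Sum>t<n. (-1)^t * f (Suc t)) \<le> B"
      using Suc.IH[of "\<lambda>t. f (Suc t)"] Suc.prems by auto
    have "(\<Sum>t<Suc n. (-1)^t * f t) = f 0 - (\<Sum>t<n. (-1)^t * f (Suc t))"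
      by (subst sum.lessThan_Suc_shift) (simp add: sum_negf)
    then show ?thesis using IH False Suc.prems(2)[of 0] by auto
  qed
qed

lemma closed_form:
  "R p q (Suc (Suc c)) k = (\<Sum>j\<le>k. real ((k - j + c) choose c) * R1 p q j)"
proof (induction c arbitrary: k)
  case 0 then show ?case by simp
next
  case (Suc c)
  define S where "S c k = (\<Sum>j\<le>k. real ((k - j + c) choose c) * R1 p q j)" for c k
  have key: "(\<Sum>i\<le>k. S c i) = S (Suc c) k" for k
  proof (induction k)
    case 0 then show ?case by (simp add: S_def)
  next
    case (Suc k)
    have "S (Suc c) (Suc k) = (\<Sum>j\<le>k. real ((Suc k - j + Suc c) choose Suc c) * R1 p q j) + R1 p q (Suc k)"
      by (simp add: S_def)
    also have "(\<Sum>j\<le>k. real ((Suc k - j + Suc c) choose Suc c) * R1 p q j)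
       = (\<Sum>j\<le>k. real ((k - j + Suc c) choose Suc c) * R1 p q j + real ((Suc k - j + c) choose c) * R1 p q j)"
    proof (rule sum.cong)
      fix j assume "j \<in> {..k}"
      then have "Suc k - j + Suc c = Suc (k - j + Suc c)" "Suc k - j + c = k - j + Suc c" by auto
      then show "real ((Suc k - j + Suc c) choose Suc c) * R1 p q j = real ((k - j + Suc c) choose Suc c) * R1 p q j + real ((Suc k - j + c) choose c) * R1 p q j"
        by (simp add: algebra_simps)
    qed simp
    also have "\<dots> = S (Suc c) k + (\<Sum>j\<le>k. real ((Suc k - j + c) choose c) * R1 p q j)"
      by (simp add: S_def sum.distrib)
    finally have "S (Suc c) (Suc k) = S (Suc c) k + S c (Suc k)"
      by (simp add: S_def)
    then show ?case using Suc.IH by simp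
  qed
  have "R p q (Suc (Suc (Suc c))) k = (\<Sum>i\<le>k. R p q (Suc (Suc c)) i)" by simp
  also have "\<dots> = (\<Sum>i\<le>k. S c i)" using Suc.IH by (simp add: S_def)
  also have "\<dots> = S (Suc c) k" by (rule key)
  finally show ?case by (simp add: S_def)
qed



lemma P_lemma:
  fixes a g :: "nat \<Rightarrow> real" and I :: "nat \<Rightarrow> bool"
  assumes Idown: "\<And>t. I (Suc t) \<Longrightarrow> I t"
    and apos: "\<And>t. I t \<Longrightarrow> 0 < a t"
    and alc: "\<And>t. I (Suc (Suc t)) \<Longrightarrow> a t * a (Suc (Suc t)) \<le> a (Suc t)^2"
    and gnn: "\<And>t. 0 \<le> g t"
    and gz: "\<And>t. g t = 0 \<Longrightarrow> g (Suc t) = 0"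
    and glc: "\<And>t. g t * g (Suc (Suc t)) \<le> g (Suc t)^2"
    and fdef: "\<And>t. f t = (if I t then a t * g t else 0)"
    and le: "f (Suc t) \<le> f t"
  shows "f (Suc (Suc t)) \<le> f (Suc t)"
proof -
  have fnn: "0 \<le> f t" for t using apos[of t] gnn[of t] fdef[of t] by (auto intro: mult_nonneg_nonneg less_imp_le)
  show ?thesis
  proof (cases "I (Suc (Suc t))")
    case False then show ?thesis using fdef[of "Suc (Suc t)"] fnn[of "Suc t"] by simp
  next
    case True
    then have I1: "I (Suc t)" and I0: "I t" using Idown by auto
    show ?thesis
    proof (cases "g (Suc t) = 0 \<or> g t = 0")
      case True
      then have "g (Suc (Suc t)) = 0" using gz by blast
      then have "f (Suc (Suc t)) = 0" using fdef[of "Suc (Suc t)"] by simp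
      then show ?thesis using fnn[of "Suc t"] by simp
    next
      case False
      then have gp: "0 < g t" "0 < g (Suc t)" using gnn by (auto simp: less_le)
      have f0: "f t = a t * g t" and f1: "f (Suc t) = a (Suc t) * g (Suc t)"
        and f2: "f (Suc (Suc t)) = a (Suc (Suc t)) * g (Suc (Suc t))"
        using fdef I0 I1 True by auto
      have f0p: "0 < f t" using f0 gp apos[OF I0] by simp
      have "f t * f (Suc (Suc t)) = (a t * a (Suc (Suc t))) * (g t * g (Suc (Suc t)))"
        using f0 f2 by (simp add: mult_ac)
      also have "\<dots> \<le> a (Suc t)^2 * g (Suc t)^2"
        using alc[OF True] glc[of t] apos[OF I0] apos[OF True] gnn
        by (intro mult_mono) auto
      also have "\<dots> = f (Suc t) * f (Suc t)" using f1 by (simp add: power2_eq_square mult_ac)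
      also have "\<dots> \<le> f t * f (Suc t)" using le fnn[of "Suc t"] by (intro mult_right_mono) auto
      finally show ?thesis using f0p by (simp add: mult_le_cancel_left_pos)
    qed
  qed
qed



theorem lemma4p4:
  fixes p q e c k :: nat
  assumes "prime p" and "e \<ge> 1" and "q = p ^ e" and "c \<ge> 2"
  shows "R p q c k \<le> real p * Max ((\<lambda>j. real ((k + c - 2 - j) choose (c - 2))
            * ((real q / real p - 1) gchoose (j div p))) ` {0..k})"
proof -
  obtain d where cd: "c = Suc (Suc d)" using assms(4) by (metis add_2_eq_Suc le_Suc_ex)
  have p0: "0 < p" using assms(1) prime_gt_0_nat by blast
  define m where "m = p ^ (e - 1) - 1"
  have pe: "p ^ e = p * p ^ (e - 1)" using assms(2) by (metis Suc_diff_le diff_Suc_1 power_Suc)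
  have pe1: "1 \<le> p ^ (e - 1)" using p0 by simp
  have qm: "real q / real p - 1 = real m"
    using p0 pe pe1 by (simp add: assms(3) m_def of_nat_diff)
  define G where "G t = real (m choose t)" for t
  have Gq: "(real q / real p - 1) gchoose t = G t" for t
    by (simp add: qm G_def binomial_gbinomial)
  define w where "w s = real ((s + d) choose d)" for s
  define T where "T j = real ((k + c - 2 - j) choose (c - 2)) * ((real q / real p - 1) gchoose (j div p))" for j
  define B where "B = Max (T ` {0..k})"
  have TB: "T j \<le> B" if "j \<le> k" for j
    unfolding B_def using that by (intro Max_ge) auto
  have Tw: "T j = w (k - j) * G (j div p)" if "j \<le> k" for j
    using that by (simp add: T_def w_def Gq cd)
  have B0: "0 \<le> B" using TB[of 0] Tw[of 0] by (simp add: w_def G_def)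
  have R1G: "R1 p q j = - ((-1) ^ (j div p) * G (j div p))" for j
    by (simp add: R1_def Gq)
  define F where "F j = (if j \<le> k then w (k - j) * R1 p q j else 0)" for j
  define n where "n = Suc (k div p)"
  have kn: "k < n * p" using p0 unfolding n_def
    by (metis div_mult_mod_eq mod_less_divisor add_less_mono1 mult_Suc nat_add_left_cancel_less mult.commute add.commute)
  have "R p q c k = (\<Sum>j\<le>k. w (k - j) * R1 p q j)"
    unfolding cd closed_form w_def by simp
  also have "\<dots> = (\<Sum>j<n*p. F j)"
  proof -
    have "{j \<in> {..<n*p}. j \<le> k} = {..k}" using kn by auto
    then show ?thesis
      unfolding F_def using sum.inter_filter[of "{..<n*p}" "\<lambda>j. w (k - j) * R1 p q j" "\<lambda>j. j \<le> k"]
      by simp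
  qed
  also have "\<dots> = (\<Sum>t<n. sum F {t*p..<t*p+p})" by (rule sum.nat_group[symmetric])
  also have "\<dots> = (\<Sum>t<n. \<Sum>r<p. F (t*p + r))"
    by (simp add: sum.atLeastLessThan_shift_0[of F] atLeast0LessThan comp_def)
  also have "\<dots> = (\<Sum>r<p. \<Sum>t<n. F (t*p + r))" by (rule sum.swap)
  also have "\<dots> \<le> (\<Sum>r<p. B)"
  proof (rule sum_mono)
    fix r assume "r \<in> {..<p}"
    then have rp: "r < p" by simp
    define f where "f t = (if t*p + r \<le> k then w (k - (t*p + r)) * G t else 0)" for t
    have divt: "(t*p + r) div p = t" for t using rp p0 by simp
    have Ff: "F (t*p + r) = - ((-1)^t * f t)" for t
      by (simp add: F_def f_def R1G divt)
    have wpos: "0 < w s" for s by (simp add: w_def)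
    have Gnn: "0 \<le> G t" for t by (simp add: G_def)
    have fnn: "0 \<le> f t" for t using wpos[of "k - (t*p+r)"] Gnn[of t] by (simp add: f_def)
    have fB: "f t \<le> B" for t
    proof (cases "t*p + r \<le> k")
      case True
      then show ?thesis using TB[OF True] Tw[OF True] by (simp add: f_def divt)
    qed (simp add: f_def B0)
    have Pf: "f (Suc (Suc t)) \<le> f (Suc t)" if "f (Suc t) \<le> f t" for t
    proof (rule P_lemma[where I = "\<lambda>t. t*p + r \<le> k" and a = "\<lambda>t. w (k - (t*p + r))" and g = G])
      show "\<And>t. Suc t * p + r \<le> k \<Longrightarrow> t * p + r \<le> k" by simp
      show "\<And>t. t * p + r \<le> k \<Longrightarrow> 0 < w (k - (t * p + r))" using wpos by simp
      show "w (k - (t * p + r)) * w (k - (Suc (Suc t) * p + r)) \<le> (w (k - (Suc t * p + r)))\<^sup>2"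
        if "Suc (Suc t) * p + r \<le> k" for t
      proof -
        define s where "s = k - (Suc (Suc t) * p + r)"
        have e1: "k - (t * p + r) = s + 2 * p" and e2: "k - (Suc t * p + r) = s + p"
          using that unfolding s_def by (auto simp: algebra_simps)
        show ?thesis unfolding e1 e2 s_def[symmetric] w_def
          using w_logconc[of s d p] by (simp add: mult.commute)
      qed
      show "\<And>t. 0 \<le> G t" by (rule Gnn)
      show "\<And>t. G t = 0 \<Longrightarrow> G (Suc t) = 0" by (simp add: G_def)
      show "G t * G (Suc (Suc t)) \<le> (G (Suc t))\<^sup>2" for t
      proof -
        have "real ((m choose t) * (m choose Suc (Suc t))) \<le> real ((m choose Suc t)^2)"
          using binom_logconc[of m t] by (rule of_nat_mono)
        then show ?thesis by (simp add: G_def)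
      qed
      show "\<And>t. f t = (if t * p + r \<le> k then w (k - (t * p + r)) * G t else 0)" by (rule f_def)
      show "f (Suc t) \<le> f t" by (rule that)
    qed
    have "(\<Sum>t<n. F (t*p + r)) = - (\<Sum>t<n. (-1)^t * f t)"
      by (simp add: Ff sum_negf)
    also have "\<dots> \<le> B - f 0" using alt_unimodal[of f B n, OF fnn fB Pf] by linarith
    also have "\<dots> \<le> B" using fnn[of 0] by simp
    finally show "(\<Sum>t<n. F (t*p + r)) \<le> B" .
  qed
  also have "\<dots> = real p * B" by simp
  finally show ?thesis unfolding B_def T_def .
qed


end
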